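(* Let $R\subset S$ be a distributive FCP ring extension with Loewy series $\{S_i\}_{i=0}^n$. Then $R\subset S$ is a $\mathcal P$-extension if and only if the following condition holds: for every $T\in[R,S]$ with $T\neq R$, $T$ is $\Pi$-irreducible in $[R,S]$ if and only if there exists some $i\in\{0,\ldots,n-1\}$ such that $T$ is an atom of $[S_i,S_{i+1}]$.
   Context: All rings are commutative with identity. $[R,S]$ is the lattice of $R$-subalgebras of $S$ (meet = intersection, join = product $TU$). FCP: every chain in $[R,S]$ is finite. $T\subset U$ minimal means $[T,U]=\{T,U\}$; an atom of $[A,B]$ is $T$ with $A\subset T$ minimal and $T\subseteq B$; the socle $\mathcal S[A,B]$ is the product of all atoms of $[A,B]$. Loewy series: $S_0=R$, $S_{i+1}=\mathcal S[S_i,S]$ while $S_i\neq S$, $n$ least with $S_n=S$. The extension is a $\mathcal P$-extension if $[R,S]=\bigcup_{i=0}^{n-1}[S_i,S_{i+1}]$. Distributive: $[R,S]$ is a distributive lattice. An element $T\in[R,S]$ is $\Pi$-irreducible if $T=T_1T_2$ with $T_1,T_2\in[R,S]$ implies $T=T_1$ or $T=T_2$. *)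

theory Defs
  imports "HOL-Algebra.Algebra"
begin

text \<open>The ring extension R \<subset> S is modelled by a commutative ring S (HOL-Algebra record)
  and a subring R of S. Elements of [A,B] are the subrings T of S with A \<subseteq> T \<subseteq> B.\<close>

definition interval :: "('a, 'b) ring_scheme \<Rightarrow> 'a set \<Rightarrow> 'a set \<Rightarrow> 'a set set" where
  "interval S A B = {T. subring T S \<and> A \<subseteq> T \<and> T \<subseteq> B}"

definition ring_prod :: "('a, 'b) ring_scheme \<Rightarrow> 'a set \<Rightarrow> 'a set \<Rightarrow> 'a set" where
  "ring_prod S T U = generate_ring S (T \<union> U)"

definition FCP :: "('a, 'b) ring_scheme \<Rightarrow> 'a set \<Rightarrow> bool" where
  "FCP S R \<longleftrightarrow> (\<forall>Ch. Ch \<subseteq> interval S R (carrier S) \<and> (\<forall>T1\<in>Ch. \<forall>T2\<in>Ch. T1 \<subseteq> T2 \<or> T2 \<subseteq> T1)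
                       \<longrightarrow> finite Ch)"

definition distributive_ext :: "('a, 'b) ring_scheme \<Rightarrow> 'a set \<Rightarrow> bool" where
  "distributive_ext S R \<longleftrightarrow>
     (\<forall>T\<in>interval S R (carrier S). \<forall>U\<in>interval S R (carrier S). \<forall>V\<in>interval S R (carrier S).
        T \<inter> ring_prod S U V = ring_prod S (T \<inter> U) (T \<inter> V)
      \<and> ring_prod S T (U \<inter> V) = ring_prod S T U \<inter> ring_prod S T V)"

definition minimal_ext :: "('a, 'b) ring_scheme \<Rightarrow> 'a set \<Rightarrow> 'a set \<Rightarrow> bool" where
  "minimal_ext S T U \<longleftrightarrow> T \<subset> U \<and> interval S T U = {T, U}"

definition is_atom :: "('a, 'b) ring_scheme \<Rightarrow> 'a set \<Rightarrow> 'a set \<Rightarrow> 'a set \<Rightarrow> bool" where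
  "is_atom S A B T \<longleftrightarrow> subring T S \<and> minimal_ext S A T \<and> T \<subseteq> B"

definition socle :: "('a, 'b) ring_scheme \<Rightarrow> 'a set \<Rightarrow> 'a set \<Rightarrow> 'a set" where
  "socle S A B = generate_ring S (A \<union> \<Union>{T. is_atom S A B T})"

fun loewy :: "('a, 'b) ring_scheme \<Rightarrow> 'a set \<Rightarrow> nat \<Rightarrow> 'a set" where
  "loewy S R 0 = R"
| "loewy S R (Suc i) = (if loewy S R i = carrier S then carrier S
                         else socle S (loewy S R i) (carrier S))"

definition loewy_length :: "('a, 'b) ring_scheme \<Rightarrow> 'a set \<Rightarrow> nat" where
  "loewy_length S R = (LEAST n. loewy S R n = carrier S)"

definition P_extension :: "('a, 'b) ring_scheme \<Rightarrow> 'a set \<Rightarrow> bool" where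
  "P_extension S R \<longleftrightarrow>
     interval S R (carrier S) =
       (\<Union>i<loewy_length S R. interval S (loewy S R i) (loewy S R (Suc i)))"

definition Pi_irreducible :: "('a, 'b) ring_scheme \<Rightarrow> 'a set \<Rightarrow> 'a set \<Rightarrow> bool" where
  "Pi_irreducible S R T \<longleftrightarrow>
     (\<forall>T1\<in>interval S R (carrier S). \<forall>T2\<in>interval S R (carrier S).
        T = ring_prod S T1 T2 \<longrightarrow> T = T1 \<or> T = T2)"

end

theory Submission
  imports Defs
begin

lemma step_exists: "Q (0::nat) \<Longrightarrow> \<not> Q n \<Longrightarrow> \<exists>i<n. Q i \<and> \<not> Q (Suc i)"
proof (induction n)
  case 0
  then show ?case by simp
next
  case (Suc n)
  show ?case
  proof (cases "Q n")
    case True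
    then show ?thesis using Suc by auto
  next
    case False
    then obtain i where "i < n" "Q i \<and> \<not> Q (Suc i)" using Suc by blast
    then show ?thesis by (intro exI[of _ i]) simp
  qed
qed

locale ctx = ring S for S :: "('a, 'b) ring_scheme" (structure) +
  fixes R :: "'a set"
  assumes R_sub: "subring R S" and dist: "distributive_ext S R" and fcp: "FCP S R"
    and R_ne: "R \<noteq> carrier S"
begin

abbreviation "LL \<equiv> interval S R (carrier S)"

lemma gen_incl: "H \<subseteq> generate_ring S H"
  using generate_ring.incl[of _ H S] by (rule subsetI)

lemma gen_sub: assumes h: "subring H S" shows "generate_ring S H = H"
  using generate_ring_min_subring1[OF subringE(1)[OF h] h order_refl] gen_incl[of H] by (rule antisym)

lemma gen_union:
  assumes "A \<subseteq> carrier S" "B \<subseteq> carrier S"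
  shows "generate_ring S (A \<union> generate_ring S B) = generate_ring S (A \<union> B)"
proof
  have s: "subring (generate_ring S (A \<union> B)) S" using assms generate_ring_is_subring by auto
  have "generate_ring S B \<subseteq> generate_ring S (A \<union> B)" using mono_generate_ring assms by auto
  moreover have "A \<subseteq> generate_ring S (A \<union> B)" using gen_incl by blast
  moreover have "A \<union> generate_ring S B \<subseteq> carrier S" using assms generate_ring_incl by auto
  ultimately show "generate_ring S (A \<union> generate_ring S B) \<subseteq> generate_ring S (A \<union> B)"
    using generate_ring_min_subring1[OF _ s] by auto
next
  have "A \<union> B \<subseteq> A \<union> generate_ring S B" using gen_incl by blast
  moreover have "A \<union> generate_ring S B \<subseteq> carrier S" using assms generate_ring_incl by auto
  ultimately show "generate_ring S (A \<union> B) \<subseteq> generate_ring S (A \<union> generate_ring S B)"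
    using mono_generate_ring by auto
qed

lemma sub_carr: "subring T S \<Longrightarrow> T \<subseteq> carrier S"
  by (rule subringE(1))

lemma L_iff: "T \<in> LL \<longleftrightarrow> subring T S \<and> R \<subseteq> T"
  unfolding interval_def using sub_carr[of T] by auto

lemma L_carr: "T \<in> LL \<Longrightarrow> T \<subseteq> carrier S"
  unfolding interval_def by auto

lemma prod_ge1: "T \<subseteq> ring_prod S T U"
  unfolding ring_prod_def using gen_incl[of "T \<union> U"] by (rule subset_trans[OF Un_upper1])

lemma prod_ge2: "U \<subseteq> ring_prod S T U"
  unfolding ring_prod_def using gen_incl[of "T \<union> U"] by (rule subset_trans[OF Un_upper2])

lemma prod_le:
  assumes V: "subring V S" "T \<subseteq> V" "U \<subseteq> V"
  shows "ring_prod S T U \<subseteq> V"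
proof -
  have "T \<union> U \<subseteq> carrier S" using V sub_carr[OF V(1)] by auto
  then show ?thesis unfolding ring_prod_def
    using generate_ring_min_subring1[OF _ V(1)] V by auto
qed

lemma prod_L:
  assumes "T \<in> LL" "U \<in> LL" shows "ring_prod S T U \<in> LL"
proof -
  have "T \<union> U \<subseteq> carrier S" using L_carr[OF assms(1)] L_carr[OF assms(2)] by auto
  then have "subring (ring_prod S T U) S" unfolding ring_prod_def
    using generate_ring_is_subring by auto
  moreover have "R \<subseteq> ring_prod S T U" using prod_ge1[of T U] assms L_iff by auto
  ultimately show ?thesis using L_iff by auto
qed

lemma inter_L: assumes "T \<in> LL" "U \<in> LL" shows "T \<inter> U \<in> LL"
proof -
  have "subring T S" "subring U S" "R \<subseteq> T" "R \<subseteq> U" using assms L_iff by auto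
  then show ?thesis unfolding L_iff using subring_inter[of T U] by auto
qed

lemma carrier_L: "carrier S \<in> LL"
  unfolding L_iff using carrier_is_subring sub_carr[OF R_sub] by simp

lemma no_inf_chain:
  fixes f :: "nat \<Rightarrow> 'a set"
  assumes "inj f" "\<And>i. f i \<in> LL" "\<And>i j. f i \<subseteq> f j \<or> f j \<subseteq> f i"
  shows False
proof -
  have h: "range f \<subseteq> LL \<and> (\<forall>T1\<in>range f. \<forall>T2\<in>range f. T1 \<subseteq> T2 \<or> T2 \<subseteq> T1)"
    using assms(2,3) by auto
  have "finite (range f)"
    using fcp[unfolded FCP_def, rule_format, OF h] .
  then show False using range_inj_infinite[OF assms(1)] by simp
qed

lemma chain_inj:
  fixes f :: "nat \<Rightarrow> 'a set"
  assumes lt: "\<And>i j. i < j \<Longrightarrow> f i \<noteq> f j"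
  shows "inj f"
proof (rule injI)
  fix i j assume "f i = f j"
  then show "i = j" using lt[of i j] lt[of j i] using less_linear[of i j] by blast
qed

lemma no_strict_inc:
  fixes f :: "nat \<Rightarrow> 'a set"
  assumes "\<And>i. f i \<in> LL" "\<And>i. f i \<subset> f (Suc i)"
  shows False
proof -
  have le: "i \<le> j \<Longrightarrow> f i \<subseteq> f j" for i j
    using lift_Suc_mono_le[of f i j] assms(2) by blast
  have lt: "i < j \<Longrightarrow> f i \<noteq> f j" for i j
    using le[of "Suc i" j] assms(2)[of i] by auto
  have "inj f" using chain_inj[of f] lt by blast
  moreover have "f i \<subseteq> f j \<or> f j \<subseteq> f i" for i j
    using le[of i j] le[of j i] by (cases "i \<le> j") auto
  ultimately show False using no_inf_chain[of f] assms(1) by blast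
qed

definition rel :: "('a set \<times> 'a set) set" where
  "rel = {(U, T). U \<in> LL \<and> T \<in> LL \<and> U \<subset> T}"

lemma wf_rel: "wf rel"
proof (rule ccontr)
  assume "\<not> wf rel"
  then obtain f where f: "\<And>i. (f (Suc i), f i) \<in> rel"
    unfolding wf_iff_no_infinite_down_chain by blast
  have fL: "f i \<in> LL" for i using f[of i] unfolding rel_def by auto
  have fs: "f (Suc i) \<subset> f i" for i using f[of i] unfolding rel_def by auto
  have le: "i \<le> j \<Longrightarrow> f j \<subseteq> f i" for i j
    using lift_Suc_antimono_le[of f i j] fs by blast
  have lt: "i < j \<Longrightarrow> f i \<noteq> f j" for i j
    using le[of "Suc i" j] fs[of i] by auto
  have "inj f" using chain_inj[of f] lt by blast
  moreover have "f i \<subseteq> f j \<or> f j \<subseteq> f i" for i j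
    using le[of i j] le[of j i] by (cases "i \<le> j") auto
  ultimately show False using no_inf_chain[of f] fL by blast
qed

lemma L_sub: "T \<in> LL \<Longrightarrow> subring T S" using L_iff by blast
lemma L_R: "T \<in> LL \<Longrightarrow> R \<subseteq> T" using L_iff by blast

lemma interval_iff: "V \<in> interval S A B \<longleftrightarrow> subring V S \<and> A \<subseteq> V \<and> V \<subseteq> B"
  unfolding interval_def by simp

lemma atom_exists:
  assumes W: "W \<in> LL" "W \<noteq> carrier S"
  shows "\<exists>a. is_atom S W (carrier S) a"
proof -
  let ?Q = "{U \<in> LL. W \<subset> U}"
  have "carrier S \<in> ?Q" using carrier_L L_carr[OF W(1)] W(2) by blast
  then obtain z where z: "z \<in> ?Q" and zmin: "\<And>y. (y, z) \<in> rel \<Longrightarrow> y \<notin> ?Q"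
    using wfE_min[OF wf_rel, of "carrier S" ?Q] by blast
  have zL: "z \<in> LL" and Xz: "W \<subset> z" using z by auto
  have "interval S W z = {W, z}"
  proof
    show "interval S W z \<subseteq> {W, z}"
    proof
      fix V assume V: "V \<in> interval S W z"
      then have Vs: "subring V S" "W \<subseteq> V" "V \<subseteq> z" unfolding interval_iff by auto
      have VL: "V \<in> LL" unfolding L_iff using Vs L_R[OF W(1)] by auto
      show "V \<in> {W, z}"
      proof (rule ccontr)
        assume "V \<notin> {W, z}"
        then have "V \<in> ?Q" "(V, z) \<in> rel" using Vs VL zL unfolding rel_def by auto
        then show False using zmin by blast
      qed
    qed
  next
    show "{W, z} \<subseteq> interval S W z"
      using L_sub[OF W(1)] L_sub[OF zL] Xz by (auto simp: interval_iff)
  qed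
  then show ?thesis unfolding is_atom_def minimal_ext_def
    using L_sub[OF zL] L_carr[OF zL] Xz by blast
qed

abbreviation "lw \<equiv> loewy S R"

lemma atoms_sub: "is_atom S W (carrier S) a \<Longrightarrow> a \<subseteq> carrier S"
  unfolding is_atom_def by auto

lemma loewy_L: "lw i \<in> LL"
proof (induction i)
  case 0
  then show ?case using R_sub L_iff by auto
next
  case (Suc i)
  have "socle S (lw i) (carrier S) \<in> LL"
  proof -
    have sub: "lw i \<union> \<Union>{T. is_atom S (lw i) (carrier S) T} \<subseteq> carrier S"
      using L_carr[OF Suc] atoms_sub by blast
    have "subring (socle S (lw i) (carrier S)) S"
      unfolding socle_def using generate_ring_is_subring[OF sub] .
    moreover have "R \<subseteq> socle S (lw i) (carrier S)"
      unfolding socle_def using L_R[OF Suc] gen_incl[of "lw i \<union> \<Union>{T. is_atom S (lw i) (carrier S) T}"]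
      by blast
    ultimately show ?thesis unfolding L_iff by blast
  qed
  then show ?case using carrier_L by simp
qed

lemma loewy_Suc_sup: "lw i \<subseteq> lw (Suc i)"
proof (cases "lw i = carrier S")
  case True
  then show ?thesis by simp
next
  case False
  have "lw i \<subseteq> socle S (lw i) (carrier S)"
    unfolding socle_def using gen_incl[of "lw i \<union> \<Union>{T. is_atom S (lw i) (carrier S) T}"] by blast
  then show ?thesis using False by simp
qed

lemma loewy_mono: "i \<le> j \<Longrightarrow> lw i \<subseteq> lw j"
  using lift_Suc_mono_le[of lw i j, OF loewy_Suc_sup] by simp

lemma atom_sub_socle: "is_atom S W (carrier S) a \<Longrightarrow> a \<subseteq> socle S W (carrier S)"
  unfolding socle_def using gen_incl[of "W \<union> \<Union>{T. is_atom S W (carrier S) T}"] by blast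

lemma loewy_strict: "lw i \<noteq> carrier S \<Longrightarrow> lw i \<subset> lw (Suc i)"
proof -
  assume ne: "lw i \<noteq> carrier S"
  obtain a where a: "is_atom S (lw i) (carrier S) a" using atom_exists[OF loewy_L[of i] ne] by blast
  have "a \<subseteq> lw (Suc i)" using atom_sub_socle[OF a] ne by simp
  moreover have "lw i \<subset> a" using a unfolding is_atom_def minimal_ext_def by auto
  ultimately show ?thesis using loewy_Suc_sup[of i] by blast
qed

lemma loewy_ends: "\<exists>n. lw n = carrier S"
proof (rule ccontr)
  assume "\<not> ?thesis"
  then have "lw i \<subset> lw (Suc i)" for i using loewy_strict by blast
  then show False using no_strict_inc[of lw] loewy_L by blast
qed

abbreviation "nn \<equiv> loewy_length S R"

lemma lw_n: "lw nn = carrier S"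
  unfolding loewy_length_def using loewy_ends by (rule LeastI_ex)

lemma lw_less: "i < nn \<Longrightarrow> lw i \<noteq> carrier S"
  unfolding loewy_length_def by (rule not_less_Least)

lemma lw_ge: "nn \<le> m \<Longrightarrow> lw m = carrier S"
  using loewy_mono[of nn m] lw_n L_carr[OF loewy_L[of m]] by blast

lemma lw_layer: "i < nn \<Longrightarrow> lw (Suc i) = socle S (lw i) (carrier S)"
  using lw_less by simp

lemma layer_atom_iff:
  assumes "i < nn"
  shows "is_atom S (lw i) (lw (Suc i)) T \<longleftrightarrow> is_atom S (lw i) (carrier S) T"
  using atom_sub_socle[of "lw i" T] lw_layer[OF assms] L_carr[OF loewy_L[of "Suc i"]]
  unfolding is_atom_def by blast

definition PP :: "'a set \<Rightarrow> 'a set set \<Rightarrow> 'a set" where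
  "PP W B = generate_ring S (W \<union> \<Union>B)"

lemma atom_L: "W \<in> LL \<Longrightarrow> is_atom S W (carrier S) b \<Longrightarrow> b \<in> LL"
  unfolding is_atom_def minimal_ext_def L_iff by blast

lemma atom_lt: "is_atom S W (carrier S) b \<Longrightarrow> W \<subset> b"
  unfolding is_atom_def minimal_ext_def by blast

lemma atom_int: "is_atom S W (carrier S) b \<Longrightarrow> interval S W b = {W, b}"
  unfolding is_atom_def minimal_ext_def by blast

lemma PP_sub: "W \<in> LL \<Longrightarrow> B \<subseteq> {a. is_atom S W (carrier S) a} \<Longrightarrow> W \<union> \<Union>B \<subseteq> carrier S"
  using L_carr atoms_sub by blast

lemma PP_ge: "W \<subseteq> PP W B"
  unfolding PP_def using gen_incl[of "W \<union> \<Union>B"] by blast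

lemma PP_L:
  assumes "W \<in> LL" "B \<subseteq> {a. is_atom S W (carrier S) a}"
  shows "PP W B \<in> LL"
proof -
  have "subring (PP W B) S" unfolding PP_def using generate_ring_is_subring[OF PP_sub[OF assms]] .
  moreover have "R \<subseteq> PP W B" using L_R[OF assms(1)] PP_ge[of W B] by blast
  ultimately show ?thesis unfolding L_iff by blast
qed

lemma PP_empty: "W \<in> LL \<Longrightarrow> PP W {} = W"
  unfolding PP_def using gen_sub[OF L_sub] by simp

lemma PP_insert:
  assumes "W \<in> LL" "B \<subseteq> {a. is_atom S W (carrier S) a}" "is_atom S W (carrier S) b"
  shows "PP W (insert b B) = ring_prod S b (PP W B)"
proof -
  have c1: "b \<subseteq> carrier S" using assms(3) atoms_sub by blast
  have c2: "W \<union> \<Union>B \<subseteq> carrier S" using PP_sub[OF assms(1,2)] .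
  have "ring_prod S b (PP W B) = generate_ring S (b \<union> (W \<union> \<Union>B))"
    unfolding ring_prod_def PP_def using gen_union[OF c1 c2] by simp
  also have "b \<union> (W \<union> \<Union>B) = W \<union> \<Union>(insert b B)" by auto
  finally show ?thesis unfolding PP_def by simp
qed

lemma dist2:
  assumes "T \<in> LL" "U \<in> LL" "V \<in> LL"
  shows "T \<inter> ring_prod S U V = ring_prod S (T \<inter> U) (T \<inter> V)"
proof -
  have "\<forall>T\<in>LL. \<forall>U\<in>LL. \<forall>V\<in>LL. T \<inter> ring_prod S U V = ring_prod S (T \<inter> U) (T \<inter> V)"
    using dist unfolding distributive_ext_def by simp
  then show ?thesis using assms by blast
qed

lemma atom_inter:
  assumes W: "W \<in> LL" and T: "T \<in> LL" "W \<subseteq> T" and b: "is_atom S W (carrier S) b"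
  shows "T \<inter> b = (if b \<subseteq> T then b else W)"
proof -
  have bL: "b \<in> LL" using atom_L[OF W b] .
  have "T \<inter> b \<in> interval S W b"
    unfolding interval_iff using L_sub[OF inter_L[OF T(1) bL]] T(2) atom_lt[OF b] by blast
  then have "T \<inter> b \<in> {W, b}" using atom_int[OF b] by simp
  then have "T \<inter> b = W \<or> T \<inter> b = b" by blast
  moreover have "W \<subset> b" using atom_lt[OF b] .
  ultimately show ?thesis by auto
qed

lemma atoms_disj:
  assumes W: "W \<in> LL" and a: "is_atom S W (carrier S) a" and b: "is_atom S W (carrier S) b"
    and ne: "a \<noteq> b"
  shows "\<not> b \<subseteq> a"
proof
  assume ba: "b \<subseteq> a"
  have "b \<in> interval S W a"
    unfolding interval_iff using L_sub[OF atom_L[OF W b]] ba atom_lt[OF b] by blast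
  then have "b \<in> {W, a}" using atom_int[OF a] by simp
  then show False using atom_lt[OF b] ne by blast
qed

lemma meet_PP:
  assumes W: "W \<in> LL" and T: "T \<in> LL" "W \<subseteq> T"
  shows "finite B \<Longrightarrow> B \<subseteq> {a. is_atom S W (carrier S) a} \<Longrightarrow>
      T \<inter> PP W B = PP W {b\<in>B. b \<subseteq> T}"
proof (induction B rule: finite_induct)
  case empty
  have "T \<inter> PP W {} = W" using PP_empty[OF W] T(2) by blast
  then show ?case using PP_empty[OF W] by simp
next
  case (insert b B)
  have b: "is_atom S W (carrier S) b" and B: "B \<subseteq> {a. is_atom S W (carrier S) a}"
    using insert.prems by auto
  have bL: "b \<in> LL" using atom_L[OF W b] .
  have B': "{x\<in>B. x \<subseteq> T} \<subseteq> {a. is_atom S W (carrier S) a}" using B by auto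
  have "T \<inter> PP W (insert b B) = ring_prod S (T \<inter> b) (T \<inter> PP W B)"
    using PP_insert[OF W B b] dist2[OF T(1) bL PP_L[OF W B]] by simp
  also have "\<dots> = ring_prod S (T \<inter> b) (PP W {x\<in>B. x \<subseteq> T})" using insert.IH[OF B] by simp
  also have "\<dots> = PP W {x\<in>insert b B. x \<subseteq> T}"
  proof (cases "b \<subseteq> T")
    case True
    then have e1: "T \<inter> b = b" by blast
    have e2: "{x\<in>insert b B. x \<subseteq> T} = insert b {x\<in>B. x \<subseteq> T}" using True by blast
    show ?thesis unfolding e1 e2 using PP_insert[OF W B' b] by simp
  next
    case False
    then have e1: "T \<inter> b = W" using atom_inter[OF W T b] by simp
    have e2: "{x\<in>insert b B. x \<subseteq> T} = {x\<in>B. x \<subseteq> T}" using False by blast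
    have e3: "W \<union> PP W {x\<in>B. x \<subseteq> T} = PP W {x\<in>B. x \<subseteq> T}" using PP_ge[of W] by blast
    show ?thesis unfolding e1 e2 ring_prod_def e3
      using gen_sub[OF L_sub[OF PP_L[OF W B']]] .
  qed
  finally show ?case .
qed

lemma indep:
  assumes W: "W \<in> LL" and fin: "finite B" and B: "B \<subseteq> {a. is_atom S W (carrier S) a}"
    and a: "is_atom S W (carrier S) a" "a \<notin> B"
  shows "a \<inter> PP W B = W"
proof -
  have aL: "a \<in> LL" using atom_L[OF W a(1)] .
  have Xa: "W \<subseteq> a" using atom_lt[OF a(1)] by blast
  have e: "{b\<in>B. b \<subseteq> a} = {}"
  proof -
    have "\<not> b \<subseteq> a" if "b \<in> B" for b
      using atoms_disj[OF W a(1), of b] B that a(2) by blast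
    then show ?thesis by blast
  qed
  have "a \<inter> PP W B = PP W {b\<in>B. b \<subseteq> a}" using meet_PP[OF W aL Xa fin B] .
  also have "\<dots> = PP W {}" by (subst e) (rule refl)
  also have "\<dots> = W" by (rule PP_empty[OF W])
  finally show ?thesis .
qed

lemma atoms_finite:
  assumes W: "W \<in> LL"
  shows "finite {a. is_atom S W (carrier S) a}"
proof (rule ccontr)
  let ?A = "{a. is_atom S W (carrier S) a}"
  assume "infinite ?A"
  then obtain f :: "nat \<Rightarrow> 'a set" where f: "inj f" "range f \<subseteq> ?A"
    using infinite_countable_subset by blast
  define g where "g k = PP W (f ` {..<k})" for k
  have sub: "f ` {..<k} \<subseteq> ?A" for k using f by auto
  have gL: "g k \<in> LL" for k unfolding g_def using PP_L[OF W sub] .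
  have "g k \<subset> g (Suc k)" for k
  proof -
    have fk: "is_atom S W (carrier S) (f k)" using f by auto
    have eq: "g (Suc k) = ring_prod S (f k) (g k)"
      unfolding g_def using PP_insert[OF W sub fk] by (simp add: lessThan_Suc)
    have "f k \<notin> f ` {..<k}" using f(1) by (auto dest: injD)
    then have "f k \<inter> g k = W" unfolding g_def using indep[OF W _ sub fk] by simp
    moreover have "W \<subset> f k" using fk unfolding is_atom_def minimal_ext_def by auto
    ultimately have "\<not> f k \<subseteq> g k" by auto
    then show ?thesis using eq prod_ge1[of "f k" "g k"] prod_ge2[of "g k" "f k"] by auto
  qed
  then show False using no_strict_inc[of g] gL by blast
qed

lemma irr_in:
  assumes W: "W \<in> LL" and irr: "Pi_irreducible S R T" and TX: "T \<noteq> W"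
  shows "finite B \<Longrightarrow> B \<subseteq> {a. is_atom S W (carrier S) a} \<Longrightarrow> T = PP W B \<Longrightarrow> T \<in> B"
proof (induction B rule: finite_induct)
  case empty
  then show ?case using PP_empty[OF W] TX by simp
next
  case (insert b B)
  have b: "is_atom S W (carrier S) b" and B: "B \<subseteq> {a. is_atom S W (carrier S) a}" using insert by auto
  have bL: "b \<in> LL" using W b unfolding is_atom_def minimal_ext_def L_iff by auto
  have "T = ring_prod S b (PP W B)" using insert PP_insert[OF W B b] by simp
  then have "T = b \<or> T = PP W B" using irr bL PP_L[OF W B] unfolding Pi_irreducible_def by blast
  then show ?case using insert B by auto
qed

lemma key:
  assumes W: "W \<in> LL" and T: "T \<in> LL" "W \<subseteq> T" "T \<subseteq> socle S W (carrier S)"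
    and irr: "Pi_irreducible S R T" and TX: "T \<noteq> W"
  shows "is_atom S W (carrier S) T"
proof -
  let ?A = "{a. is_atom S W (carrier S) a}"
  have fin: "finite ?A" using atoms_finite[OF W] .
  have "socle S W (carrier S) = PP W ?A" unfolding socle_def PP_def by simp
  then have "T = T \<inter> PP W ?A" using T by auto
  also have "\<dots> = PP W {b\<in>?A. b \<subseteq> T}" using meet_PP[OF W T(1,2) fin] by simp
  finally have "T = PP W {b\<in>?A. b \<subseteq> T}" .
  then have "T \<in> {b\<in>?A. b \<subseteq> T}"
    using irr_in[OF W irr TX, of "{b\<in>?A. b \<subseteq> T}"] fin by auto
  then show ?thesis by auto
qed

lemma atom_irr:
  assumes P: "P_extension S R" and i: "i < nn" and at: "is_atom S (lw i) (lw (Suc i)) T"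
  shows "Pi_irreducible S R T"
  unfolding Pi_irreducible_def
proof (intro ballI impI)
  fix T1 T2 assume T1: "T1 \<in> LL" and T2: "T2 \<in> LL" and eq: "T = ring_prod S T1 T2"
  have iT: "lw i \<subset> T" "T \<subseteq> lw (Suc i)" "interval S (lw i) T = {lw i, T}"
    using at unfolding is_atom_def minimal_ext_def by auto
  have claim: "U \<subseteq> lw i" if U: "U \<in> LL" "U \<subseteq> T" "U \<noteq> T" for U
  proof -
    from U(1) P obtain j where j: "j < nn" "U \<in> interval S (lw j) (lw (Suc j))"
      unfolding P_extension_def by blast
    have jU: "lw j \<subseteq> U" "U \<subseteq> lw (Suc j)" using j unfolding interval_def by auto
    consider "j < i" | "j = i" | "i < j" by linarith
    then show ?thesis
    proof cases
      case 1
      then show ?thesis using jU loewy_mono[of "Suc j" i] by auto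
    next
      case 2
      then have "U \<in> interval S (lw i) T" using jU U L_iff unfolding interval_def by auto
      then show ?thesis using iT U by auto
    next
      case 3
      then have "lw (Suc i) \<subseteq> U" using jU loewy_mono[of "Suc i" j] by auto
      then show ?thesis using iT U by auto
    qed
  qed
  show "T = T1 \<or> T = T2"
  proof (rule ccontr)
    assume "\<not> ?thesis"
    then have n1: "T1 \<noteq> T" and n2: "T2 \<noteq> T" by auto
    have s1: "T1 \<subseteq> T" using eq prod_ge1[of T1 T2] by simp
    have s2: "T2 \<subseteq> T" using eq prod_ge2[of T2 T1] by simp
    have "T1 \<subseteq> lw i" using claim[OF T1 s1 n1] .
    moreover have "T2 \<subseteq> lw i" using claim[OF T2 s2 n2] .
    ultimately have "T \<subseteq> lw i" using eq prod_le[OF L_sub[OF loewy_L[of i]]] by simp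
    then show False using iT by auto
  qed
qed

lemma irr_atom:
  assumes P: "P_extension S R" and T: "T \<in> LL" "T \<noteq> R" and irr: "Pi_irreducible S R T"
  shows "\<exists>i<nn. is_atom S (lw i) (lw (Suc i)) T"
proof -
  from T(1) P obtain j where j: "j < nn" "T \<in> interval S (lw j) (lw (Suc j))"
    unfolding P_extension_def by blast
  have "\<exists>i<nn. T \<in> interval S (lw i) (lw (Suc i)) \<and> T \<noteq> lw i"
  proof (cases "T = lw j")
    case False
    then show ?thesis using j by blast
  next
    case True
    then have "j \<noteq> 0" using T(2) by auto
    then obtain k where k: "j = Suc k" by (cases j) auto
    have "lw k \<noteq> carrier S" using lw_less j(1) k by simp
    then have "lw k \<subset> T" using loewy_strict True k by simp
    moreover have "T \<in> interval S (lw k) (lw (Suc k))"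
      using True k T(1) L_iff loewy_Suc_sup unfolding interval_def by auto
    ultimately show ?thesis using j(1) k by (intro exI[of _ k]) auto
  qed
  then obtain i where i: "i < nn" "T \<in> interval S (lw i) (lw (Suc i))" "T \<noteq> lw i" by blast
  have "is_atom S (lw i) (carrier S) T"
    using key[OF loewy_L[of i] T(1) _ _ irr i(3)] i lw_layer[OF i(1)]
    unfolding interval_def by auto
  then show ?thesis using layer_atom_iff i(1) by blast
qed

lemma cond_P:
  assumes cond: "\<forall>T\<in>LL. T \<noteq> R \<longrightarrow>
       (Pi_irreducible S R T \<longleftrightarrow> (\<exists>i<nn. is_atom S (lw i) (lw (Suc i)) T))"
  shows "P_extension S R"
proof -
  have C: "T \<in> LL \<longrightarrow> (\<forall>m. \<not> lw m \<subseteq> T \<longrightarrow> T \<subseteq> lw m)" for T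
  proof (induction T rule: wf_induct[OF wf_rel])
    case (1 T)
    show ?case
    proof (intro impI allI)
      fix m assume TL: "T \<in> LL" and nm: "\<not> lw m \<subseteq> T"
      show "T \<subseteq> lw m"
      proof (cases "T = R")
        case True
        then show ?thesis using loewy_mono[of 0 m] by simp
      next
        case TR: False
        show ?thesis
        proof (cases "Pi_irreducible S R T")
          case True
          then obtain j where j: "j < nn" "is_atom S (lw j) (lw (Suc j)) T"
            using cond TL TR by blast
          have jT: "lw j \<subseteq> T" "T \<subseteq> lw (Suc j)"
            using j(2) unfolding is_atom_def minimal_ext_def by auto
          show ?thesis
          proof (cases "m \<le> j")
            case True
            then show ?thesis using loewy_mono[of m j] jT nm by auto
          next
            case False
            then show ?thesis using loewy_mono[of "Suc j" m] jT by auto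
          qed
        next
          case False
          then obtain T1 T2 where T12: "T1 \<in> LL" "T2 \<in> LL" "T = ring_prod S T1 T2"
            "T \<noteq> T1" "T \<noteq> T2"
            unfolding Pi_irreducible_def by blast
          have r1: "(T1, T) \<in> rel" using T12 TL prod_ge1 unfolding rel_def by blast
          have r2: "(T2, T) \<in> rel" using T12 TL prod_ge2 unfolding rel_def by blast
          have "\<not> lw m \<subseteq> T1" "\<not> lw m \<subseteq> T2" using nm T12 prod_ge1 prod_ge2 by blast+
          then have "T1 \<subseteq> lw m" "T2 \<subseteq> lw m" using 1 r1 r2 T12 by blast+
          then show ?thesis using T12 prod_le loewy_L L_iff by blast
        qed
      qed
    qed
  qed
  have n1: "nn \<noteq> 0"
  proof
    assume "nn = 0"
    then have "lw 0 = carrier S" using lw_n by simp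
    then show False using R_ne by simp
  qed
  show ?thesis unfolding P_extension_def
  proof
    show "LL \<subseteq> (\<Union>i<nn. interval S (lw i) (lw (Suc i)))"
    proof
      fix T assume TL: "T \<in> LL"
      show "T \<in> (\<Union>i<nn. interval S (lw i) (lw (Suc i)))"
      proof (cases "lw nn \<subseteq> T")
        case True
        then have "T = carrier S" using lw_n TL L_iff sub_carr by blast
        moreover obtain k where k: "nn = Suc k" using n1 by (cases nn) auto
        ultimately have "T \<in> interval S (lw k) (lw (Suc k))"
          unfolding interval_iff using L_sub[OF TL] loewy_Suc_sup[of k] lw_n k L_carr[OF loewy_L[of k]]
          by simp
        moreover have "k < nn" using k by simp
        ultimately show ?thesis by blast
      next
        case False
        obtain i where i: "i < nn" "lw i \<subseteq> T" "\<not> lw (Suc i) \<subseteq> T"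
          using step_exists[of "\<lambda>i. lw i \<subseteq> T" nn] False TL L_iff by auto
        then have "T \<subseteq> lw (Suc i)" using C TL by blast
        then have "T \<in> interval S (lw i) (lw (Suc i))"
          unfolding interval_iff using L_sub[OF TL] i(2) by blast
        then show ?thesis using i(1) by blast
      qed
    qed
  next
    show "(\<Union>i<nn. interval S (lw i) (lw (Suc i))) \<subseteq> LL"
    proof
      fix T assume "T \<in> (\<Union>i<nn. interval S (lw i) (lw (Suc i)))"
      then obtain i where "T \<in> interval S (lw i) (lw (Suc i))" by blast
      then show "T \<in> LL" using loewy_L[of i] L_iff unfolding interval_def by auto
    qed
  qed
qed

end

theorem theorem8p6:
  fixes S :: "('a, 'b) ring_scheme" and R :: "'a set"
  assumes "cring S" and "subring R S" and "R \<noteq> carrier S"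
    and "distributive_ext S R" and "FCP S R"
  shows "P_extension S R \<longleftrightarrow>
    (\<forall>T\<in>interval S R (carrier S). T \<noteq> R \<longrightarrow>
       (Pi_irreducible S R T \<longleftrightarrow>
          (\<exists>i<loewy_length S R. is_atom S (loewy S R i) (loewy S R (Suc i)) T)))"
proof -
  interpret ctx S R
    using assms cring.axioms(1) unfolding ctx_def ctx_axioms_def by blast
  show ?thesis
  proof
    assume P: "P_extension S R"
    show "\<forall>T\<in>interval S R (carrier S). T \<noteq> R \<longrightarrow>
       (Pi_irreducible S R T \<longleftrightarrow>
          (\<exists>i<loewy_length S R. is_atom S (loewy S R i) (loewy S R (Suc i)) T))"
      using irr_atom[OF P] atom_irr[OF P] by blast
  next
    assume "\<forall>T\<in>interval S R (carrier S). T \<noteq> R \<longrightarrow>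
       (Pi_irreducible S R T \<longleftrightarrow>
          (\<exists>i<loewy_length S R. is_atom S (loewy S R i) (loewy S R (Suc i)) T))"
    then show "P_extension S R" using cond_P by blast
  qed
qed

end
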